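(* Let $\mathfrak{A}$ be a $(\circ,\wedge,\mathsf{A})$-algebra that is representable by partial functions and atomic, and in which composition is completely left-distributive over joins (for every $a\in\mathfrak{A}$ and every $S\subseteq\mathfrak{A}$ such that $\bigvee S$ exists, $\bigvee\{a\circ s\mid s\in S\}$ exists and equals $a\circ\bigvee S$). Let $\mathrm{At}(\mathfrak{A})$ be the set of atoms of $\mathfrak{A}$, and for $a\in\mathfrak{A}$ define the partial function $\theta(a)$ on $\mathrm{At}(\mathfrak{A})$ by $\theta(a)(x)=x\circ a$ if $x\circ a\neq 0$, and undefined otherwise. Then $x\circ a$ is an atom whenever it is nonzero, and $\theta$ is a complete representation of $\mathfrak{A}$ by partial functions with base $\mathrm{At}(\mathfrak{A})$.
   Context: A $(\circ,\wedge,\mathsf{A})$-algebra is a set with two binary operations $\circ,\wedge$ and one unary operation $\mathsf{A}$. An algebra of partial functions of this signature is a set of partial functions, with base $X$ the union of all their domains and ranges, closed under: composition $f\circ g=\{(x,z)\mid \exists y\,(x,y)\in f,(y,z)\in g\}$ (apply $f$ first, then $g$); intersection; antidomain $\mathsf{A}(f)=\{(x,x)\mid x\in X, x\notin\mathrm{dom}(f)\}$. A representation by partial functions is an isomorphism onto such an algebra. The order is $a\le b\iff a\wedge b=a$, with least element $0=\mathsf{A}(a)\circ a$. An atom is a minimal nonzero element; $\mathfrak{A}$ is atomic if every nonzero element is above an atom. A representation $\theta$ is complete if for every $S$ with $\bigvee S$ existing, $\theta(\bigvee S)=\bigcup\theta[S]$ (equivalently, for every nonempty $S$ with $\bigwedge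 S$ existing, $\theta(\bigwedge S)=\bigcap\theta[S]$). *)

theory Defs
  imports Main
begin

text \<open>Composition is diagrammatic: c f g = "f first, then g", matching relational
composition O in Isabelle.\<close>

definition base :: "('a \<Rightarrow> ('b \<times> 'b) set) \<Rightarrow> 'b set" where
  "base \<theta> = (\<Union>a. Domain (\<theta> a) \<union> Range (\<theta> a))"

definition rep_pf ::
  "('a \<Rightarrow> 'a \<Rightarrow> 'a) \<Rightarrow> ('a \<Rightarrow> 'a \<Rightarrow> 'a) \<Rightarrow> ('a \<Rightarrow> 'a) \<Rightarrow> ('a \<Rightarrow> ('b \<times> 'b) set) \<Rightarrow> bool" where
  "rep_pf c m ad \<theta> \<longleftrightarrow>
     inj \<theta> \<and>
     (\<forall>a. single_valued (\<theta> a)) \<and>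
     (\<forall>a b. \<theta> (c a b) = \<theta> a O \<theta> b) \<and>
     (\<forall>a b. \<theta> (m a b) = \<theta> a \<inter> \<theta> b) \<and>
     (\<forall>a. \<theta> (ad a) = {(x, x) | x. x \<in> base \<theta> \<and> x \<notin> Domain (\<theta> a)})"

definition le :: "('a \<Rightarrow> 'a \<Rightarrow> 'a) \<Rightarrow> 'a \<Rightarrow> 'a \<Rightarrow> bool" where
  "le m a b \<longleftrightarrow> m a b = a"

text \<open>Least element 0 = A(a) o a (independent of a in representable algebras;
we use a fixed arbitrary element).\<close>
definition zero :: "('a \<Rightarrow> 'a \<Rightarrow> 'a) \<Rightarrow> ('a \<Rightarrow> 'a) \<Rightarrow> 'a" where
  "zero c ad = c (ad undefined) undefined"

definition atom :: "('a \<Rightarrow> 'a \<Rightarrow> 'a) \<Rightarrow> ('a \<Rightarrow> 'a \<Rightarrow> 'a) \<Rightarrow> ('a \<Rightarrow> 'a) \<Rightarrow> 'a \<Rightarrow> bool" where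
  "atom c m ad x \<longleftrightarrow> x \<noteq> zero c ad \<and> (\<forall>y. le m y x \<longrightarrow> y = zero c ad \<or> y = x)"

definition atomic :: "('a \<Rightarrow> 'a \<Rightarrow> 'a) \<Rightarrow> ('a \<Rightarrow> 'a \<Rightarrow> 'a) \<Rightarrow> ('a \<Rightarrow> 'a) \<Rightarrow> bool" where
  "atomic c m ad \<longleftrightarrow> (\<forall>a. a \<noteq> zero c ad \<longrightarrow> (\<exists>x. atom c m ad x \<and> le m x a))"

definition is_join :: "('a \<Rightarrow> 'a \<Rightarrow> 'a) \<Rightarrow> 'a set \<Rightarrow> 'a \<Rightarrow> bool" where
  "is_join m S j \<longleftrightarrow> (\<forall>s\<in>S. le m s j) \<and> (\<forall>u. (\<forall>s\<in>S. le m s u) \<longrightarrow> le m j u)"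

definition comp_left_distrib :: "('a \<Rightarrow> 'a \<Rightarrow> 'a) \<Rightarrow> ('a \<Rightarrow> 'a \<Rightarrow> 'a) \<Rightarrow> bool" where
  "comp_left_distrib c m \<longleftrightarrow>
     (\<forall>a S j. is_join m S j \<longrightarrow> is_join m ((\<lambda>s. c a s) ` S) (c a j))"

definition complete_rep ::
  "('a \<Rightarrow> 'a \<Rightarrow> 'a) \<Rightarrow> ('a \<Rightarrow> 'a \<Rightarrow> 'a) \<Rightarrow> ('a \<Rightarrow> 'a) \<Rightarrow> ('a \<Rightarrow> ('b \<times> 'b) set) \<Rightarrow> bool" where
  "complete_rep c m ad \<theta> \<longleftrightarrow> rep_pf c m ad \<theta> \<and>
     (\<forall>S j. is_join m S j \<longrightarrow> \<theta> j = (\<Union>s\<in>S. \<theta> s))"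

definition atom_theta :: "('a \<Rightarrow> 'a \<Rightarrow> 'a) \<Rightarrow> ('a \<Rightarrow> 'a \<Rightarrow> 'a) \<Rightarrow> ('a \<Rightarrow> 'a) \<Rightarrow> 'a \<Rightarrow> ('a \<times> 'a) set" where
  "atom_theta c m ad a = {(x, c x a) | x. atom c m ad x \<and> c x a \<noteq> zero c ad}"

end

theory Submission
  imports Defs
begin

locale R =
  fixes c m :: "'a \<Rightarrow> 'a \<Rightarrow> 'a" and ad :: "'a \<Rightarrow> 'a" and th :: "'a \<Rightarrow> ('b \<times> 'b) set"
  assumes rep: "rep_pf c m ad th"
begin

lemma injth: "inj th" and sv: "single_valued (th a)" and cc: "th (c a b) = th a O th b"
  and mm: "th (m a b) = th a \<inter> th b"
  and aa: "th (ad a) = {(x,x)|x. x \<in> base th \<and> x \<notin> Domain (th a)}"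
  using rep unfolding rep_pf_def by auto

lemma eq_iff: "a = b \<longleftrightarrow> th a = th b" using injth by (auto dest: injD)

lemma le_iff: "le m a b \<longleftrightarrow> th a \<subseteq> th b"
  unfolding le_def by (metis eq_iff mm Int_absorb2 inf.orderI)

lemma dom_base: "Domain (th a) \<subseteq> base th" "Range (th a) \<subseteq> base th"
  unfolding base_def by auto

lemma th_zero: "th (zero c ad) = {}" unfolding zero_def cc aa by auto

lemma zero_iff: "a = zero c ad \<longleftrightarrow> th a = {}" using eq_iff th_zero by auto

lemma atom_iff: "atom c m ad x \<longleftrightarrow> th x \<noteq> {} \<and> (\<forall>y. th y \<subseteq> th x \<longrightarrow> th y = {} \<or> th y = th x)"
  unfolding atom_def le_iff zero_iff by (metis eq_iff)

lemma dd: "th (ad (ad y)) = {(p,p)|p. p \<in> Domain (th y)}"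
  using dom_base(1)[of y] unfolding aa by auto

lemma atom_comp:
  assumes at: "atom c m ad x" and ne0: "th (c x a) \<noteq> {}"
  shows "atom c m ad (c x a)"
proof -
  have ax: "\<forall>y. th y \<subseteq> th x \<longrightarrow> th y = {} \<or> th y = th x" using at atom_iff by blast
  have "th y = {} \<or> th y = th (c x a)" if sub: "th y \<subseteq> th (c x a)" for y
  proof (cases "th y = {}")
    case False
    let ?e = "c (ad (ad y)) x"
    have e: "th ?e = {(p,q). (p,q) \<in> th x \<and> p \<in> Domain (th y)}" unfolding cc dd by auto
    have "th ?e \<noteq> {}"
    proof -
      obtain p q where pq: "(p,q) \<in> th y" using False by auto
      then have "(p,q) \<in> th x O th a" using sub cc by auto
      then obtain r where "(p,r) \<in> th x" by auto
      then show ?thesis using e pq by auto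
    qed
    moreover have "th ?e \<subseteq> th x" using e by auto
    ultimately have "th ?e = th x" using ax by blast
    then have domx: "Domain (th x) \<subseteq> Domain (th y)" using e by auto
    have svc: "single_valued (th x O th a)" using sv single_valued_relcomp by blast
    have "th x O th a \<subseteq> th y"
    proof
      fix pq assume h: "pq \<in> th x O th a"
      obtain p q where pq: "pq = (p,q)" by force
      then have "p \<in> Domain (th y)" using h domx by auto
      then obtain q' where q': "(p,q') \<in> th y" by auto
      then have "(p,q') \<in> th x O th a" using sub cc by auto
      then have "q = q'" using svc h pq single_valuedD by metis
      then show "pq \<in> th y" using q' pq by simp
    qed
    then show ?thesis using sub cc by auto
  qed simp
  then show ?thesis using ne0 atom_iff by blast
qed


abbreviation "T \<equiv> atom_theta c m ad"

lemma T_mem: "(x,z) \<in> T a \<longleftrightarrow> atom c m ad x \<and> th (c x a) \<noteq> {} \<and> z = c x a"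
  unfolding atom_theta_def zero_iff by auto

lemma base_T: "base T = {x. atom c m ad x}"
proof
  show "base T \<subseteq> {x. atom c m ad x}"
    unfolding base_def using T_mem atom_comp by fastforce
  show "{x. atom c m ad x} \<subseteq> base T"
  proof
    fix x assume "x \<in> {x. atom c m ad x}"
    then have at: "atom c m ad x" by simp
    have "th (c x (ad (zero c ad))) = th x" unfolding cc aa th_zero using dom_base(2)[of x] by auto
    then have "(x, c x (ad (zero c ad))) \<in> T (ad (zero c ad))" using T_mem at atom_iff by metis
    then show "x \<in> base T" unfolding base_def by blast
  qed
qed

lemma ad_lem:
  assumes at: "atom c m ad x"
  shows "(th (c x (ad a)) \<noteq> {} \<longleftrightarrow> th (c x a) = {})"
    and "th (c x a) = {} \<Longrightarrow> c x (ad a) = x"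
proof -
  have e: "th (c x (ad a)) = {(p,q). (p,q) \<in> th x \<and> q \<notin> Domain (th a)}"
    unfolding cc aa using dom_base(2)[of x] by auto
  have ax: "th x \<noteq> {}" "\<forall>y. th y \<subseteq> th x \<longrightarrow> th y = {} \<or> th y = th x" using at atom_iff by blast+
  show 2: "c x (ad a) = x" if "th (c x a) = {}"
  proof -
    have "th (c x (ad a)) = th x" using that e unfolding cc by auto
    then show ?thesis using eq_iff by blast
  qed
  show "(th (c x (ad a)) \<noteq> {} \<longleftrightarrow> th (c x a) = {})"
  proof
    assume ne: "th (c x (ad a)) \<noteq> {}"
    have "th (c x (ad a)) \<subseteq> th x" using e by auto
    then have "th (c x (ad a)) = th x" using ax ne by blast
    then show "th (c x a) = {}" using e unfolding cc by auto
  next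
    assume "th (c x a) = {}"
    then show "th (c x (ad a)) \<noteq> {}" using 2 ax by simp
  qed
qed

lemma inj_aux:
  assumes atm: "atomic c m ad" and pq: "(p,q) \<in> th a" "(p,q) \<notin> th b"
  shows "T a \<noteq> T b"
proof -
  let ?y = "c (ad (m a b)) a"
  have ey: "th ?y = {(u,v). (u,v) \<in> th a \<and> u \<notin> Domain (th a \<inter> th b)}"
    unfolding cc aa mm using dom_base(1)[of a] by auto
  have "p \<notin> Domain (th a \<inter> th b)"
  proof
    assume "p \<in> Domain (th a \<inter> th b)"
    then obtain r where "(p,r) \<in> th a" "(p,r) \<in> th b" by auto
    then show False using pq sv single_valuedD by metis
  qed
  then have "(p,q) \<in> th ?y" using ey pq by auto
  then have "th (ad (ad ?y)) \<noteq> {}" unfolding dd by auto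
  then obtain x where at: "atom c m ad x" and xl: "th x \<subseteq> th (ad (ad ?y))"
    using atm unfolding atomic_def zero_iff le_iff by blast
  have xne: "th x \<noteq> {}" using at atom_iff by blast
  then obtain u u' where uu: "(u,u') \<in> th x" by auto
  then have "u' = u" "u \<in> Domain (th ?y)" using xl unfolding dd by auto
  then obtain v where uv: "(u,v) \<in> th a" "u \<notin> Domain (th a \<inter> th b)" using ey by auto
  have "(u,v) \<in> th (c x a)" using uu uv \<open>u' = u\<close> cc by auto
  then have in1: "(x, c x a) \<in> T a" using T_mem at by auto
  have "(x, c x a) \<notin> T b"
  proof
    assume "(x, c x a) \<in> T b"
    then have "c x a = c x b" using T_mem by auto
    then have "(u,v) \<in> th x O th b" using \<open>(u,v) \<in> th (c x a)\<close> cc by metis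
    then obtain w where "(u,w) \<in> th x" "(w,v) \<in> th b" by auto
    then have "w = u" using xl unfolding dd by auto
    then show False using \<open>(w,v) \<in> th b\<close> uv by auto
  qed
  then show ?thesis using in1 by auto
qed

lemma rep_T:
  assumes atm: "atomic c m ad"
  shows "rep_pf c m ad T"
  unfolding rep_pf_def
proof (intro conjI allI)
  show "inj T"
  proof (rule injI)
    fix a b assume h: "T a = T b"
    show "a = b"
    proof (rule ccontr)
      assume "a \<noteq> b"
      then have "th a \<noteq> th b" using eq_iff by blast
      then obtain p q where "((p,q) \<in> th a \<and> (p,q) \<notin> th b) \<or> ((p,q) \<in> th b \<and> (p,q) \<notin> th a)" by (metis subrelI subset_antisym)
      then show False using inj_aux[OF atm] h by metis
    qed
  qed
next
  fix a show "single_valued (T a)" unfolding single_valued_def using T_mem by auto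
next
  fix a b show "T (c a b) = T a O T b"
  proof (rule set_eqI)
    fix xz :: "'a \<times> 'a"
    obtain x z where xz: "xz = (x,z)" by force
    have as: "c x (c a b) = c (c x a) b" using eq_iff cc O_assoc by metis
    have hn: "th (c (c x a) b) \<noteq> {} \<Longrightarrow> th (c x a) \<noteq> {}" using cc by auto
    have ha: "atom c m ad x \<Longrightarrow> th (c (c x a) b) \<noteq> {} \<Longrightarrow> atom c m ad (c x a)"
      using hn atom_comp by blast
    from hn ha show "xz \<in> T (c a b) \<longleftrightarrow> xz \<in> T a O T b"
      unfolding xz relcomp_unfold using T_mem as by auto
  qed
next
  fix a b show "T (m a b) = T a \<inter> T b"
  proof (rule set_eqI)
    fix xz :: "'a \<times> 'a"
    obtain x z where xz: "xz = (x,z)" by force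
    have 1: "th (c x (m a b)) \<noteq> {} \<Longrightarrow> atom c m ad x \<Longrightarrow> c x (m a b) = c x a \<and> c x (m a b) = c x b"
    proof -
      assume ne: "th (c x (m a b)) \<noteq> {}" and at: "atom c m ad x"
      have s1: "th (c x (m a b)) \<subseteq> th (c x a)" "th (c x (m a b)) \<subseteq> th (c x b)" unfolding cc mm by auto
      then have "th (c x a) \<noteq> {}" "th (c x b) \<noteq> {}" using ne by auto
      then have "atom c m ad (c x a)" "atom c m ad (c x b)" using atom_comp at by auto
      then show ?thesis using s1 ne atom_iff eq_iff by metis
    qed
    have 2: "c x (m a b) = c x a" if h: "c x a = c x b"
    proof -
      have hh: "th x O th a = th x O th b" using h cc by metis
      have "th x O th a \<subseteq> th x O (th a \<inter> th b)"
      proof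
        fix pq assume pq: "pq \<in> th x O th a"
        then obtain p r s where prs: "pq = (p,s)" "(p,r) \<in> th x" "(r,s) \<in> th a" by auto
        then have "(p,s) \<in> th x O th b" using pq hh by auto
        then obtain r' where "(p,r') \<in> th x" "(r',s) \<in> th b" by auto
        then have "r' = r" using prs sv single_valuedD by metis
        then show "pq \<in> th x O (th a \<inter> th b)" using prs \<open>(r',s) \<in> th b\<close> by auto
      qed
      then have "th (c x (m a b)) = th (c x a)" unfolding cc mm by auto
      then show ?thesis using eq_iff by blast
    qed
    show "xz \<in> T (m a b) \<longleftrightarrow> xz \<in> T a \<inter> T b"
      unfolding xz using T_mem 1 2 by (metis IntD1 IntD2 IntI)
  qed
next
  fix a show "T (ad a) = {(x, x) |x. x \<in> base T \<and> x \<notin> Domain (T a)}"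
  proof (rule set_eqI)
    fix xz :: "'a \<times> 'a"
    obtain x z where xz: "xz = (x,z)" by force
    have dT: "x \<in> Domain (T a) \<longleftrightarrow> atom c m ad x \<and> th (c x a) \<noteq> {}" using T_mem by auto
    show "xz \<in> T (ad a) \<longleftrightarrow> xz \<in> {(x, x) |x. x \<in> base T \<and> x \<notin> Domain (T a)}"
      unfolding xz base_T using T_mem[of x z "ad a"] dT ad_lem[of x a] by auto
  qed
qed

lemma complete_T:
  assumes dist: "comp_left_distrib c m" and j: "is_join m S j"
  shows "T j = (\<Union>s\<in>S. T s)"
proof (rule set_eqI)
  fix xz :: "'a \<times> 'a"
  obtain x z where xz: "xz = (x,z)" by force
  have sj: "\<forall>s\<in>S. th s \<subseteq> th j" using j unfolding is_join_def le_iff by blast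
  show "xz \<in> T j \<longleftrightarrow> xz \<in> (\<Union>s\<in>S. T s)"
  proof
    assume "xz \<in> T j"
    then have at: "atom c m ad x" and ne: "th (c x j) \<noteq> {}" and z: "z = c x j" using T_mem xz by auto
    have jx: "is_join m ((\<lambda>s. c x s) ` S) (c x j)" using dist j unfolding comp_left_distrib_def by blast
    obtain s where s: "s \<in> S" "th (c x s) \<noteq> {}"
    proof (rule ccontr)
      assume "\<not> thesis"
      then have "\<forall>s\<in>S. th (c x s) = {}" using that by blast
      then have "\<forall>t\<in>(\<lambda>s. c x s) ` S. le m t (zero c ad)" unfolding le_iff th_zero by auto
      then have "le m (c x j) (zero c ad)" using jx unfolding is_join_def by blast
      then show False using ne unfolding le_iff th_zero by auto
    qed
    have "th (c x s) \<subseteq> th (c x j)" using sj s unfolding cc by auto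
    moreover have "atom c m ad (c x j)" using atom_comp at ne by auto
    ultimately have "c x s = c x j" using s atom_iff eq_iff by metis
    then have "(x,z) \<in> T s" using T_mem at s z by auto
    then show "xz \<in> (\<Union>s\<in>S. T s)" using s xz by auto
  next
    assume "xz \<in> (\<Union>s\<in>S. T s)"
    then obtain s where s: "s \<in> S" "(x,z) \<in> T s" using xz by auto
    then have at: "atom c m ad x" and ne: "th (c x s) \<noteq> {}" and z: "z = c x s" using T_mem by auto
    have sub: "th (c x s) \<subseteq> th (c x j)" using sj s unfolding cc by auto
    then have ne2: "th (c x j) \<noteq> {}" using ne by auto
    then have "atom c m ad (c x j)" using atom_comp at by auto
    then have "c x s = c x j" using sub ne atom_iff eq_iff by metis
    then show "xz \<in> T j" using T_mem at ne2 z xz by auto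
  qed
qed

end

theorem mainTheorem13:
  fixes c m :: "'a \<Rightarrow> 'a \<Rightarrow> 'a" and ad :: "'a \<Rightarrow> 'a" and \<theta>0 :: "'a \<Rightarrow> ('b \<times> 'b) set"
  assumes "rep_pf c m ad \<theta>0"
    and "atomic c m ad"
    and "comp_left_distrib c m"
  shows "(\<forall>x a. atom c m ad x \<and> c x a \<noteq> zero c ad \<longrightarrow> atom c m ad (c x a))
         \<and> complete_rep c m ad (atom_theta c m ad)
         \<and> base (atom_theta c m ad) = {x. atom c m ad x}"
proof -
  interpret R c m ad \<theta>0 using assms(1) by (rule R.intro)
  have 1: "\<forall>x a. atom c m ad x \<and> c x a \<noteq> zero c ad \<longrightarrow> atom c m ad (c x a)"
    using atom_comp zero_iff by blast
  have 2: "complete_rep c m ad (atom_theta c m ad)"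
    unfolding complete_rep_def using rep_T[OF assms(2)] complete_T[OF assms(3)] by blast
  show ?thesis using 1 2 base_T by blast
qed

end
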